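(* Let $B$ be a (3,3)-SAT instance with variables $x_1,\dots,x_n$ and clauses $C_1,\dots,C_m$, and let $(G,Z,\mathrm{col},\bar\alpha,\bar\beta,t)$ be the Fair Colorful Weighted Perfect Matching instance constructed from $B$ as described in the context. If $B$ is satisfiable, then $G$ has a perfect matching of total weight at least $t=3n+m$ in which, for every color, exactly one vertex of that color is matched to a vertex of $Z$.
   Context: (3,3)-SAT: a CNF formula $B=C_1\wedge\dots\wedge C_m$ over variables $x_1,\dots,x_n$, where each clause contains at most three literals and each variable occurs in at most three clauses in total; the question is whether $B$ is satisfiable. Construction: for each variable $x_i$ add to $V$ the six vertices $(x_i^T,r),(x_i^F,r)$ for $r\in\{1,2,3\}$ and to $W$ the three vertices $(x_i,a),(x_i,b),(x_i,c)$, all three placed in $Z$ (so $|Z|=3n$); introduce three new colors $c_{i,1},c_{i,2},c_{i,3}$ with $\mathrm{col}((x_i^T,r))=\mathrm{col}((x_i^F,r))=c_{i,r}$. Give weight $1$ to the edges $(x_i,a)$–$(x_i^T,1)$, $(x_i,a)$–$(x_i^F,3)$, $(x_i,b)$–$(x_i^T,2)$, $(x_i,b)$–$(x_i^F,1)$, $(x_i,c)$–$(x_i^T,3)$, $(x_i,c)$–$(x_i^F,2)$. For each clause $C_j$ add a vertex $C_j$ to $W$; fixing an ordering of the clauses, for each literal of $x_i$ in $C_j$ that is the $r$-th occurrence of $x_i$ in $B$, add a weight-$1$ edge $(x_i^T,r)$–$C_j$ if the literal is $x_i$ and $(x_i^F,r)$–$C_j$ if it is $\neg x_i$. Add dummy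 vertices to $W$ until $|W|=|V|=6n$; all remaining pairs in $V\times W$ get weight-$0$ edges, making $G$ complete bipartite. Set $t=3n+m$ and $\alpha_c=\beta_c=1/(3n)$ for every color $c$ (so exactly one vertex of each color must be matched into $Z$). *)

theory Defs
  imports Main
begin

text \<open>Variables are x_0,...,x_{n-1} (0-indexed), a literal is a pair
  (variable index, polarity) with polarity True for x_i and False for the negation of x_i,
  a clause is a list of distinct literals, and a formula is the list of its clauses
  C_0,...,C_{m-1} (the list order is the fixed clause ordering).\<close>

type_synonym lit = "nat \<times> bool"
type_synonym clause = "lit list"
type_synonym cnf = "clause list"

definition occs :: "cnf \<Rightarrow> nat \<Rightarrow> (nat \<times> bool) list" where
  "occs B i = concat (map (\<lambda>j. map (\<lambda>l. (j, snd l)) (filter (\<lambda>l. fst l = i) (B ! j)))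
                           [0..<length B])"

definition sat33 :: "nat \<Rightarrow> cnf \<Rightarrow> bool" where
  "sat33 n B \<longleftrightarrow>
     (\<forall>C\<in>set B. distinct C \<and> length C \<le> 3 \<and> (\<forall>l\<in>set C. fst l < n)) \<and>
     (\<forall>i<n. length (occs B i) \<le> 3)"

definition satisfiable :: "cnf \<Rightarrow> bool" where
  "satisfiable B \<longleftrightarrow> (\<exists>\<sigma> :: nat \<Rightarrow> bool. \<forall>C\<in>set B. \<exists>l\<in>set C. \<sigma> (fst l) = snd l)"

text \<open>Vertices of the constructed bipartite graph. VT i r = (x_i^T, r), VF i r = (x_i^F, r)
  with r \<in> {1,2,3}; WA/WB/WC i = (x_i,a),(x_i,b),(x_i,c); WCl j = clause vertex C_j;
  WD k = dummy vertices.\<close>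

datatype vtx = VT nat nat | VF nat nat
datatype wtx = WA nat | WB nat | WC nat | WCl nat | WD nat

definition Vs :: "nat \<Rightarrow> vtx set" where
  "Vs n = {VT i r | i r. i < n \<and> r \<in> {1,2,3}} \<union> {VF i r | i r. i < n \<and> r \<in> {1,2,3}}"

text \<open>Dummies fill W up to |W| = |V| = 6n; there are 6n - (3n + m) of them.\<close>
definition Ws :: "nat \<Rightarrow> cnf \<Rightarrow> wtx set" where
  "Ws n B = {WA i | i. i < n} \<union> {WB i | i. i < n} \<union> {WC i | i. i < n}
            \<union> {WCl j | j. j < length B} \<union> {WD k | k. k < 6 * n - (3 * n + length B)}"

definition Zs :: "nat \<Rightarrow> wtx set" where
  "Zs n = {WA i | i. i < n} \<union> {WB i | i. i < n} \<union> {WC i | i. i < n}"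

text \<open>Colour of a vertex of V: c_{i,r} is represented by the pair (i,r).\<close>
fun col :: "vtx \<Rightarrow> nat \<times> nat" where
  "col (VT i r) = (i, r)"
| "col (VF i r) = (i, r)"

text \<open>Edge weights of the complete bipartite graph (1 for the listed edges, 0 otherwise).
  The r-th occurrence of x_i is occs B i ! (r-1).\<close>
fun weight :: "cnf \<Rightarrow> vtx \<Rightarrow> wtx \<Rightarrow> nat" where
  "weight B (VT i r) (WA i') = (if i' = i \<and> r = 1 then 1 else 0)"
| "weight B (VF i r) (WA i') = (if i' = i \<and> r = 3 then 1 else 0)"
| "weight B (VT i r) (WB i') = (if i' = i \<and> r = 2 then 1 else 0)"
| "weight B (VF i r) (WB i') = (if i' = i \<and> r = 1 then 1 else 0)"
| "weight B (VT i r) (WC i') = (if i' = i \<and> r = 3 then 1 else 0)"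
| "weight B (VF i r) (WC i') = (if i' = i \<and> r = 2 then 1 else 0)"
| "weight B (VT i r) (WCl j) =
     (if 1 \<le> r \<and> r \<le> length (occs B i) \<and> occs B i ! (r - 1) = (j, True) then 1 else 0)"
| "weight B (VF i r) (WCl j) =
     (if 1 \<le> r \<and> r \<le> length (occs B i) \<and> occs B i ! (r - 1) = (j, False) then 1 else 0)"
| "weight B v (WD k) = 0"

text \<open>A perfect matching of the complete bipartite graph on VV \<union> WW (every pair is an edge).\<close>
definition perfect_matching :: "'v set \<Rightarrow> 'w set \<Rightarrow> ('v \<times> 'w) set \<Rightarrow> bool" where
  "perfect_matching VV WW M \<longleftrightarrow> M \<subseteq> VV \<times> WW \<and>
     (\<forall>v\<in>VV. \<exists>!w. (v, w) \<in> M) \<and> (\<forall>w\<in>WW. \<exists>!v. (v, w) \<in> M)"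

definition match_weight :: "cnf \<Rightarrow> (vtx \<times> wtx) set \<Rightarrow> nat" where
  "match_weight B M = (\<Sum>(v, w)\<in>M. weight B v w)"

text \<open>Fairness with alpha_c = beta_c = 1/(3n): for every colour c_{i,r}, exactly one vertex
  of that colour is matched to a vertex of Z.\<close>
definition fair :: "nat \<Rightarrow> (vtx \<times> wtx) set \<Rightarrow> bool" where
  "fair n M \<longleftrightarrow> (\<forall>i<n. \<forall>r\<in>{1,2,3::nat}.
     card {v\<in>Vs n. col v = (i, r) \<and> (\<exists>w\<in>Zs n. (v, w) \<in> M)} = 1)"

end

theory Submission imports Defs begin

fun zside :: "(nat \<Rightarrow> bool) \<Rightarrow> vtx \<Rightarrow> bool" where
  "zside s (VT i r) = (\<not> s i)"
| "zside s (VF i r) = s i"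

fun zmap :: "vtx \<Rightarrow> wtx" where
  "zmap (VT i r) = (if r = 1 then WA i else if r = 2 then WB i else WC i)"
| "zmap (VF i r) = (if r = 3 then WA i else if r = 1 then WB i else WC i)"

lemma Vs_alt: "Vs n = (\<lambda>(i,r). VT i r) ` ({..<n} \<times> {1,2,3}) \<union> (\<lambda>(i,r). VF i r) ` ({..<n} \<times> {1,2,3})"
  unfolding Vs_def by auto

lemma card_Vs: "card (Vs n) = 6 * n"
proof -
  have i1: "inj_on (\<lambda>(i,r). VT i r) A" for A by (auto simp: inj_on_def)
  have i2: "inj_on (\<lambda>(i,r). VF i r) A" for A by (auto simp: inj_on_def)
  have "card (Vs n) = card ((\<lambda>(i,r). VT i r) ` ({..<n} \<times> {1,2,3::nat})) + card ((\<lambda>(i,r). VF i r) ` ({..<n} \<times> {1,2,3::nat}))"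
    unfolding Vs_alt by (rule card_Un_disjoint) auto
  also have "\<dots> = 6 * n" by (simp add: card_image[OF i1] card_image[OF i2] card_cartesian_product)
  finally show ?thesis .
qed

lemma finite_Vs: "finite (Vs n)" unfolding Vs_alt by auto

lemma Zs_alt: "Zs n = WA ` {..<n} \<union> WB ` {..<n} \<union> WC ` {..<n}"
  unfolding Zs_def by auto

lemma card_Zs: "card (Zs n) = 3 * n"
proof -
  have "card (Zs n) = card (WA ` {..<n} \<union> WB ` {..<n}) + card (WC ` {..<n})"
    unfolding Zs_alt by (rule card_Un_disjoint) auto
  also have "card (WA ` {..<n} \<union> WB ` {..<n}) = card (WA ` {..<n}) + card (WB ` {..<n})"
    by (rule card_Un_disjoint) auto
  finally show ?thesis by (simp add: card_image inj_on_def)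
qed

lemma zmap_img: "zmap ` {v \<in> Vs n. zside s v} = Zs n"
proof
  show "zmap ` {v \<in> Vs n. zside s v} \<subseteq> Zs n"
    unfolding Vs_def Zs_def by auto
  show "Zs n \<subseteq> zmap ` {v \<in> Vs n. zside s v}"
  proof
    fix w assume "w \<in> Zs n"
    then obtain i where i: "i < n" and w: "w = WA i \<or> w = WB i \<or> w = WC i" unfolding Zs_def by auto
    have A: "VT i r \<in> Vs n" "VF i r \<in> Vs n" if "r \<in> {1,2,3}" for r using i that unfolding Vs_def by auto
    let ?u = "\<lambda>r. if s i then VF i r else VT i r"
    have u: "?u r \<in> {v \<in> Vs n. zside s v}" if "r \<in> {1,2,3}" for r using A[OF that] by auto
    have "w = zmap (?u 1) \<or> w = zmap (?u 2) \<or> w = zmap (?u 3)" using w by auto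
    then show "w \<in> zmap ` {v \<in> Vs n. zside s v}" using u by blast
  qed
qed

lemma zmap_inj: "inj_on zmap {v \<in> Vs n. zside s v}"
  unfolding inj_on_def Vs_def by (auto split: if_splits)

lemma zmap_weight: "v \<in> Vs n \<Longrightarrow> weight B v (zmap v) = 1"
  unfolding Vs_def by auto

lemma occs_mem: "j < length B \<Longrightarrow> (i,p) \<in> set (B ! j) \<Longrightarrow> (j,p) \<in> set (occs B i)"
  unfolding occs_def by (auto intro!: bexI[where x=j] image_eqI[where x="(i,p)"])


lemma pm_of_bij:
  assumes "bij_betw f VV WW"
  shows "perfect_matching VV WW ((\<lambda>v. (v, f v)) ` VV)"
  using assms unfolding perfect_matching_def bij_betw_def inj_on_def by auto

lemma inj_Un2: "inj_on f A \<Longrightarrow> inj_on f B \<Longrightarrow> f ` A \<inter> f ` B = {} \<Longrightarrow> inj_on f (A \<union> B)"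
  unfolding inj_on_def by blast

theorem lemmaD4:
  fixes n :: nat and B :: cnf
  assumes "sat33 n B" and "satisfiable B"
  shows "\<exists>M. perfect_matching (Vs n) (Ws n B) M \<and> match_weight B M \<ge> 3 * n + length B
             \<and> fair n M"
proof -
  define m where "m = length B"
  obtain s where s: "\<forall>C\<in>set B. \<exists>l\<in>set C. s (fst l) = snd l"
    using assms(2) unfolding satisfiable_def by blast
  have ex: "\<exists>x. (\<lambda>(i,p,k). i < n \<and> s i = p \<and> k < 3 \<and> k < length (occs B i) \<and> occs B i ! k = (j,p)) x"
    if j: "j \<in> {..<m}" for j
  proof -
    have "B ! j \<in> set B" using j m_def by simp
    then obtain l where l: "l \<in> set (B ! j)" "s (fst l) = snd l" using s by blast
    obtain i p where ip: "l = (i,p)" by force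
    have "i < n" using assms(1) \<open>B ! j \<in> set B\<close> l ip unfolding sat33_def by force
    have "(j,p) \<in> set (occs B i)" using occs_mem[of j B i p] j l ip m_def by simp
    then obtain k where k: "k < length (occs B i)" "occs B i ! k = (j,p)" by (auto simp: in_set_conv_nth)
    have "length (occs B i) \<le> 3" using assms(1) \<open>i < n\<close> unfolding sat33_def by blast
    then have "(\<lambda>(i,p,k). i < n \<and> s i = p \<and> k < 3 \<and> k < length (occs B i) \<and> occs B i ! k = (j,p)) (i,p,k)"
      using k \<open>i < n\<close> l ip by simp
    then show ?thesis by blast
  qed
  obtain h where h: "\<forall>j\<in>{..<m}. (\<lambda>(i,p,k). i < n \<and> s i = p \<and> k < 3 \<and> k < length (occs B i) \<and> occs B i ! k = (j,p)) (h j)"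
    using bchoice[OF ballI[OF ex]] by (rule exE)
  define cv where "cv j = (case h j of (i,p,k) \<Rightarrow> if p then VT i (Suc k) else VF i (Suc k))" for j
  have cvp: "cv j \<in> Vs n \<and> \<not> zside s (cv j) \<and> weight B (cv j) (WCl j) = 1" if "j < m" for j
  proof -
    obtain i p k where hj: "h j = (i,p,k)" by (cases "h j") auto
    have P: "i < n" "s i = p" "k < 3" "k < length (occs B i)" "occs B i ! k = (j,p)"
      using bspec[OF h, of j] that hj by simp_all
    show ?thesis using P unfolding cv_def hj Vs_def by auto
  qed
  have cv_inj: "inj_on cv {..<m}"
  proof (rule inj_onI)
    fix j j' assume j: "j \<in> {..<m}" and j': "j' \<in> {..<m}" and e: "cv j = cv j'"
    obtain i p k where hj: "h j = (i,p,k)" by (cases "h j") auto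
    obtain i' p' k' where hj': "h j' = (i',p',k')" by (cases "h j'") auto
    have P: "occs B i ! k = (j,p)" "occs B i' ! k' = (j',p')" using bspec[OF h, of j] bspec[OF h, of j'] j j' hj hj' by simp_all
    have "i = i' \<and> p = p' \<and> k = k'" using e unfolding cv_def hj hj' by (auto split: if_splits)
    then show "j = j'" using P by auto
  qed
  define Zp where "Zp = {v \<in> Vs n. zside s v}"
  define Cp where "Cp = cv ` {..<m}"
  define R where "R = Vs n - Zp - Cp"
  define D where "D = WD ` {..< 6 * n - (3 * n + m)}"
  have finV: "finite (Vs n)" by (rule finite_Vs)
  have ZpV: "Zp \<subseteq> Vs n" and CpV: "Cp \<subseteq> Vs n" using cvp unfolding Zp_def Cp_def by auto
  have ZC: "Zp \<inter> Cp = {}" using cvp unfolding Zp_def Cp_def by auto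
  have cZp: "card Zp = 3 * n"
    using card_image[OF zmap_inj[of n s]] zmap_img[of n s] card_Zs[of n] unfolding Zp_def by simp
  have cCp: "card Cp = m" unfolding Cp_def using card_image[OF cv_inj] by simp
  have cZC: "card (Zp \<union> Cp) = 3 * n + m"
    using card_Un_disjoint[of Zp Cp] ZC cZp cCp finV ZpV CpV by (metis finite_subset)
  have R_eq: "R = Vs n - (Zp \<union> Cp)" unfolding R_def by blast
  have cR: "card R = 6 * n - (3 * n + m)"
    unfolding R_eq using card_Diff_subset[of "Zp \<union> Cp" "Vs n"] ZpV CpV finV cZC card_Vs[of n]
    by (metis Un_least finite_subset)
  have cD: "card D = 6 * n - (3 * n + m)" unfolding D_def by (simp add: card_image inj_on_def)
  obtain g where g: "bij_betw g R D"
    using finite_same_card_bij[of R D] cR cD finV unfolding R_def D_def by auto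
  define f where "f v = (if zside s v then zmap v else if v \<in> Cp then WCl (inv_into {..<m} cv v) else g v)" for v
  have VU: "Vs n = Zp \<union> Cp \<union> R" using ZpV CpV unfolding R_def by blast
  have fZ: "f v = zmap v" if "v \<in> Zp" for v using that unfolding f_def Zp_def by simp
  have fC: "f (cv j) = WCl j" if "j < m" for j
    using cvp[OF that] that unfolding f_def Cp_def by (simp add: inv_into_f_f[OF cv_inj])
  have fR: "f v = g v" if "v \<in> R" for v using that unfolding f_def R_def Zp_def by auto
  have iZ: "f ` Zp = Zs n" using zmap_img[of n s] fZ unfolding Zp_def by (metis (no_types, lifting) image_cong)
  have iC: "f ` Cp = WCl ` {..<m}" unfolding Cp_def image_image using fC by (intro image_cong) auto
  have iR: "f ` R = D" using g fR unfolding bij_betw_def by (metis image_cong)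
  have jZ: "inj_on f Zp" using zmap_inj[of n s] fZ unfolding Zp_def by (metis (no_types, lifting) inj_on_cong)
  have jC: "inj_on f Cp"
  proof (rule inj_onI)
    fix x y assume "x \<in> Cp" "y \<in> Cp" "f x = f y"
    then obtain j j' where "j < m" "j' < m" "x = cv j" "y = cv j'" unfolding Cp_def by auto
    then show "x = y" using \<open>f x = f y\<close> fC by auto
  qed
  have jR: "inj_on f R" using g fR unfolding bij_betw_def by (metis inj_on_cong)
  have WsU: "Ws n B = Zs n \<union> WCl ` {..<m} \<union> D" unfolding Ws_def Zs_def D_def m_def by auto
  have dis1: "Zs n \<inter> WCl ` {..<m} = {}" unfolding Zs_def by auto
  have dis2: "(Zs n \<union> WCl ` {..<m}) \<inter> D = {}" unfolding Zs_def D_def by auto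
  have jZC: "inj_on f (Zp \<union> Cp)" using inj_Un2[OF jZ jC] iZ iC dis1 by simp
  have jall: "inj_on f (Zp \<union> Cp \<union> R)" using inj_Un2[OF jZC jR] iZ iC iR dis2 by (simp add: image_Un)
  have bij: "bij_betw f (Vs n) (Ws n B)"
    unfolding bij_betw_def VU WsU using jall iZ iC iR by (simp add: image_Un)
  define M where "M = (\<lambda>v. (v, f v)) ` Vs n"
  have pm: "perfect_matching (Vs n) (Ws n B) M" unfolding M_def by (rule pm_of_bij[OF bij])
  have mw: "match_weight B M = (\<Sum>v\<in>Vs n. weight B v (f v))"
    unfolding match_weight_def M_def by (subst sum.reindex) (auto simp: inj_on_def)
  have finZC: "finite (Zp \<union> Cp)" using finV ZpV CpV finite_subset by blast
  have "(\<Sum>v\<in>Zp \<union> Cp. weight B v (f v)) \<le> (\<Sum>v\<in>Vs n. weight B v (f v))"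
    using ZpV CpV finV by (intro sum_mono2) auto
  moreover have "(\<Sum>v\<in>Zp \<union> Cp. weight B v (f v)) = (\<Sum>v\<in>Zp. weight B v (f v)) + (\<Sum>v\<in>Cp. weight B v (f v))"
    using finZC ZC by (intro sum.union_disjoint) auto
  moreover have "(\<Sum>v\<in>Zp. weight B v (f v)) = (\<Sum>v\<in>Zp. (1::nat))"
    using fZ zmap_weight ZpV by (intro sum.cong) auto
  moreover have "(\<Sum>v\<in>Zp. (1::nat)) = card Zp" by simp
  moreover have "(\<Sum>v\<in>Cp. weight B v (f v)) = (\<Sum>j<m. weight B (cv j) (f (cv j)))"
    unfolding Cp_def by (rule sum.reindex[OF cv_inj, unfolded comp_def])
  moreover have "(\<Sum>j<m. weight B (cv j) (f (cv j))) = m" using fC cvp by simp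
  ultimately have wt: "match_weight B M \<ge> 3 * n + length B" using mw cZp m_def by simp
  have fZs: "f v \<in> Zs n \<longleftrightarrow> zside s v" if "v \<in> Vs n" for v
  proof (cases "zside s v")
    case True then show ?thesis using iZ that unfolding Zp_def by auto
  next
    case False
    then have "v \<in> Cp \<union> R" using that VU unfolding Zp_def by auto
    then have "f v \<in> WCl ` {..<m} \<union> D" using iC iR by blast
    then show ?thesis using False dis1 dis2 by blast
  qed
  have fair: "fair n M" unfolding fair_def
  proof (intro allI impI ballI)
    fix i r assume i: "i < n" and r: "r \<in> {1,2,3::nat}"
    define u where "u = (if s i then VF i r else VT i r)"
    have "{v\<in>Vs n. col v = (i, r) \<and> (\<exists>w\<in>Zs n. (v, w) \<in> M)} = {v\<in>Vs n. col v = (i, r) \<and> zside s v}"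
      using fZs unfolding M_def by auto
    also have "\<dots> = {u}"
    proof
      show "{u} \<subseteq> {v\<in>Vs n. col v = (i, r) \<and> zside s v}" using i r unfolding u_def Vs_def by auto
      show "{v\<in>Vs n. col v = (i, r) \<and> zside s v} \<subseteq> {u}"
      proof
        fix v assume "v \<in> {v\<in>Vs n. col v = (i, r) \<and> zside s v}"
        then show "v \<in> {u}" unfolding u_def by (cases v) auto
      qed
    qed
    finally show "card {v\<in>Vs n. col v = (i, r) \<and> (\<exists>w\<in>Zs n. (v, w) \<in> M)} = 1" by simp
  qed
  show ?thesis using pm wt fair by blast
qed

end
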